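(* For every integer $n\ge1$ and every $k=1,\dots,n$, one has $|a_{nk}|>1$ and $|b_{nk}|<1$.
   Context: For $n\ge1$ let $y_n(z)=\sum_{k=0}^{n}\frac{(n+k)!}{(n-k)!\,k!}\left(\frac{z}{2}\right)^k$ be the $n$-th Bessel polynomial and let $\alpha_{n1},\dots,\alpha_{nn}$ be its zeros (they are simple). Put $a_{nk}=1-\alpha_{nk}/2$ and $b_{nk}=1+\alpha_{nk}/2$ for $k=1,\dots,n$. *)

theory Defs
  imports "HOL-Analysis.Analysis" "HOL-Computational_Algebra.Polynomial"
begin

definition bessel_poly :: "nat \<Rightarrow> complex poly" where
  "bessel_poly n = (\<Sum>k\<le>n. monom (of_nat (fact (n + k) div (fact (n - k) * fact k)) / 2 ^ k) k)"

end

theory Submission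
  imports Defs
begin

lemma binom_step: "real (Suc j) * real (N choose Suc j) = (real N - real j) * real (N choose j)"
proof -
  have "Suc j * (N choose Suc j) = (N - j) * (N choose j)"
    using binomial_absorption[of j N] binomial_absorb_comp[of N j] by simp
  then have e: "real (Suc j * (N choose Suc j)) = real ((N - j) * (N choose j))" by simp
  show ?thesis
  proof (cases "j \<le> N")
    case True then show ?thesis using e by (simp add: of_nat_diff algebra_simps)
  next
    case False then show ?thesis by (simp add: binomial_eq_0)
  qed
qed

lemma core:
  fixes N j k m :: nat and a a' :: real
  assumes sh: "2 * real (Suc N) * a' = real k * real (k + 2*N + 1) * a" and mk: "m = k + N"
  shows "(real m - real j) * real (m+j+1) * (real (N choose j) * a) =
     2*real (Suc j) / 1 * (real (Suc j) * (real (N choose Suc j) * a) + real (Suc N choose Suc j) * a')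
     + real (Suc j) * real (Suc (Suc j)) * (real (N choose Suc (Suc j)) * a)"
proof -
  have h1: "real (Suc j) * real (N choose Suc j) = (real N - real j) * real (N choose j)"
    using binom_step[of j N] by simp
  have h2: "real (Suc (Suc j)) * real (N choose Suc (Suc j)) = (real N - real (Suc j)) * real (N choose Suc j)"
    using binom_step[of "Suc j" N] by simp
  have h3: "real (Suc j) * real (Suc N choose Suc j) = real (Suc N) * real (N choose j)"
    using Suc_times_binomial[of j N] by (metis of_nat_mult)
  have hm: "real m = real k + real N" using mk by simp
  show ?thesis using h1 h2 h3 sh hm
    by (simp add: algebra_simps) algebra
qed


definition ac :: "nat \<Rightarrow> nat \<Rightarrow> real" where
  "ac m k = fact (2*m - k) / (fact k * fact (m - k) * 2^(m - k))"

definition cE :: "nat \<Rightarrow> nat \<Rightarrow> nat \<Rightarrow> real" where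
  "cE m j k = (if k \<le> m then real ((m - k) choose j) * ac m k else 0)"

definition EP :: "nat \<Rightarrow> nat \<Rightarrow> complex poly" where
  "EP m j = (\<Sum>k\<le>m. monom (complex_of_real (cE m j k)) k)"

lemma coeff_EP: "coeff (EP m j) i = complex_of_real (cE m j i)"
  unfolding EP_def by (simp add: coeff_sum coeff_monom cE_def)

lemma poly_EP: "poly (EP m j) w = (\<Sum>k\<le>m. complex_of_real (cE m j k) * w ^ k)"
  unfolding EP_def by (simp add: poly_sum poly_monom)

lemma ac_pos: "ac m k > 0"
  unfolding ac_def by simp

lemma ac_shift:
  assumes "Suc i \<le> m"
  shows "2 * real (Suc (m - Suc i)) * ac m i = real (Suc i) * real (Suc i + 2 * (m - Suc i) + 1) * ac m (Suc i)"
proof -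
  obtain N where m: "m = Suc i + N" using assms le_Suc_ex by blast
  have e1: "2*m - i = Suc (Suc (i + 2*N))" using m by simp
  have e2: "2*m - Suc i = Suc (i + 2*N)" using m by simp
  have e3: "m - i = Suc N" using m by simp
  have e4: "m - Suc i = N" using m by simp
  show ?thesis unfolding ac_def e1 e2 e3 e4
    by (simp add: field_simps del: of_nat_Suc)
qed

lemma ac_up:
  assumes "i \<le> m"
  shows "2 * real (Suc (m - i)) * ac (Suc m) i = real (Suc (Suc (i + 2*(m-i)))) * real (Suc (i + 2*(m-i))) * ac m i"
proof -
  obtain N where m: "m = i + N" using assms le_Suc_ex le_iff_add by blast
  have e1: "2*Suc m - i = Suc (Suc (i + 2*N))" using m by simp
  have e2: "2*m - i = i + 2*N" using m by simp
  have e3: "Suc m - i = Suc N" using m by simp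
  have e4: "m - i = N" using m by simp
  show ?thesis unfolding ac_def e1 e2 e3 e4
    by (simp add: field_simps del: of_nat_Suc)
qed

lemma ac_diag: "ac m m = 1"
  unfolding ac_def by simp


lemma lin_mult: "[:a, 1:] * (p::complex poly) = smult a p + pCons 0 p"
  by (simp add: mult_pCons_left smult_one)

lemma cE_zero: "m < i \<Longrightarrow> cE m j i = 0"
  unfolding cE_def by simp

lemma cE_rec:
  assumes "j < m"
  shows "(real m - real j) * real (m+j+1) * cE m j i =
     2*real (Suc j) / 1 * (real (Suc j) * cE m (Suc j) i + (case i of 0 \<Rightarrow> 0 | Suc i' \<Rightarrow> cE m (Suc j) i'))
     + real (Suc j) * real (Suc (Suc j)) * cE m (Suc (Suc j)) i"
proof (cases i)
  case 0
  have "(real m - real j) * real (m+j+1) * (real (m choose j) * ac m 0) =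
     2*real (Suc j) / 1 * (real (Suc j) * (real (m choose Suc j) * ac m 0) + real (Suc m choose Suc j) * 0)
     + real (Suc j) * real (Suc (Suc j)) * (real (m choose Suc (Suc j)) * ac m 0)"
    by (rule core) simp_all
  then show ?thesis using 0 by (simp add: cE_def)
next
  case (Suc i')
  show ?thesis
  proof (cases "Suc i' \<le> m")
    case True
    obtain N where m: "m = Suc i' + N" using True le_iff_add by blast
    have e4: "m - Suc i' = N" using m by simp
    have mi: "m - i' = Suc N" using m by simp
    have sh: "2 * real (Suc N) * ac m i' = real (Suc i') * real (Suc i' + 2 * N + 1) * ac m (Suc i')"
      using ac_shift[OF True] unfolding e4 .
    have c: "cE m j (Suc i') = real (N choose j) * ac m (Suc i')"
       "cE m (Suc j) (Suc i') = real (N choose Suc j) * ac m (Suc i')"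
       "cE m (Suc (Suc j)) (Suc i') = real (N choose Suc (Suc j)) * ac m (Suc i')"
       "cE m (Suc j) i' = real (Suc N choose Suc j) * ac m i'"
      using True by (simp_all add: cE_def e4 mi)
    have "(real m - real j) * real (m + j + 1) * (real (N choose j) * ac m (Suc i')) =
      2*real (Suc j) / 1 * (real (Suc j) * (real (N choose Suc j) * ac m (Suc i')) + real (Suc N choose Suc j) * ac m i')
      + real (Suc j) * real (Suc (Suc j)) * (real (N choose Suc (Suc j)) * ac m (Suc i'))"
      by (rule core[OF sh m])
    then show ?thesis unfolding Suc c nat.case(2) .
  next
    case False
    then have "m < Suc i'" by simp
    moreover have "cE m (Suc j) i' = 0"
    proof (cases "i' \<le> m")
      case True
      then have "i' = m" using False by simp
      then show ?thesis by (simp add: cE_def)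
    next
      case False then show ?thesis by (simp add: cE_def)
    qed
    ultimately show ?thesis using Suc by (simp add: cE_zero)
  qed
qed

lemma EP_rec:
  assumes "j < m"
  shows "smult (complex_of_real ((real m - real j) * real (m+j+1))) (EP m j) =
     smult (complex_of_real (2*real (Suc j))) ([:complex_of_real (real (Suc j)), 1:] * EP m (Suc j))
     + smult (complex_of_real (real (Suc j) * real (Suc (Suc j)))) (EP m (Suc (Suc j)))"
proof (rule poly_eqI)
  fix i
  have r: "(real m - real j) * real (m+j+1) * cE m j i =
     2*real (Suc j) / 1 * (real (Suc j) * cE m (Suc j) i + (case i of 0 \<Rightarrow> 0 | Suc i' \<Rightarrow> cE m (Suc j) i'))
     + real (Suc j) * real (Suc (Suc j)) * cE m (Suc (Suc j)) i"
    by (rule cE_rec[OF assms])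
  have c1: "coeff (smult (complex_of_real ((real m - real j) * real (m+j+1))) (EP m j)) i
     = complex_of_real ((real m - real j) * real (m+j+1) * cE m j i)"
    by (simp add: coeff_EP)
  have c2: "coeff (smult (complex_of_real (2*real (Suc j))) ([:complex_of_real (real (Suc j)), 1:] * EP m (Suc j))
     + smult (complex_of_real (real (Suc j) * real (Suc (Suc j)))) (EP m (Suc (Suc j)))) i
     = complex_of_real (2*real (Suc j) / 1 * (real (Suc j) * cE m (Suc j) i + (case i of 0 \<Rightarrow> 0 | Suc i' \<Rightarrow> cE m (Suc j) i'))
     + real (Suc j) * real (Suc (Suc j)) * cE m (Suc (Suc j)) i)"
  proof (cases i)
    case 0
    have "coeff (smult (complex_of_real (2*real (Suc j))) ([:complex_of_real (real (Suc j)), 1:] * EP m (Suc j))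
     + smult (complex_of_real (real (Suc j) * real (Suc (Suc j)))) (EP m (Suc (Suc j)))) 0
     = complex_of_real (2*real (Suc j)) * (complex_of_real (real (Suc j)) * complex_of_real (cE m (Suc j) 0) + 0)
       + complex_of_real (real (Suc j) * real (Suc (Suc j))) * complex_of_real (cE m (Suc (Suc j)) 0)"
      by (simp only: lin_mult coeff_add coeff_smult coeff_pCons_0 coeff_EP)
    also have "\<dots> = complex_of_real (2*real (Suc j) / 1 * (real (Suc j) * cE m (Suc j) 0 + (case 0 of 0 \<Rightarrow> 0 | Suc i' \<Rightarrow> cE m (Suc j) i'))
     + real (Suc j) * real (Suc (Suc j)) * cE m (Suc (Suc j)) 0)"
      by (simp only: of_real_mult of_real_add nat.case(1) div_by_1 add_0_right of_real_0)
    finally show ?thesis unfolding 0 .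
  next
    case (Suc i')
    have "coeff (smult (complex_of_real (2*real (Suc j))) ([:complex_of_real (real (Suc j)), 1:] * EP m (Suc j))
     + smult (complex_of_real (real (Suc j) * real (Suc (Suc j)))) (EP m (Suc (Suc j)))) (Suc i')
     = complex_of_real (2*real (Suc j)) * (complex_of_real (real (Suc j)) * complex_of_real (cE m (Suc j) (Suc i')) + complex_of_real (cE m (Suc j) i'))
       + complex_of_real (real (Suc j) * real (Suc (Suc j))) * complex_of_real (cE m (Suc (Suc j)) (Suc i'))"
      by (simp only: lin_mult coeff_add coeff_smult coeff_pCons_Suc coeff_EP)
    also have "\<dots> = complex_of_real (2*real (Suc j) / 1 * (real (Suc j) * cE m (Suc j) (Suc i') + (case Suc i' of 0 \<Rightarrow> 0 | Suc i' \<Rightarrow> cE m (Suc j) i'))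
     + real (Suc j) * real (Suc (Suc j)) * cE m (Suc (Suc j)) (Suc i'))"
      by (simp only: of_real_mult of_real_add nat.case(2) div_by_1)
    finally show ?thesis unfolding Suc .
  qed
  show "coeff (smult (complex_of_real ((real m - real j) * real (m+j+1))) (EP m j)) i =
     coeff (smult (complex_of_real (2*real (Suc j))) ([:complex_of_real (real (Suc j)), 1:] * EP m (Suc j))
     + smult (complex_of_real (real (Suc j) * real (Suc (Suc j)))) (EP m (Suc (Suc j)))) i"
    unfolding c1 c2 by (rule arg_cong[where f=complex_of_real, OF r])
qed


lemma cE_up: "cE (Suc m) 0 i = real (Suc m) * cE m 0 i + (case i of 0 \<Rightarrow> 0 | Suc i' \<Rightarrow> cE m 0 i') + cE m 1 i"
proof (cases i)
  case 0
  have u: "2 * real (Suc m) * ac (Suc m) 0 = real (Suc (Suc (2*m))) * real (Suc (2*m)) * ac m 0"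
    using ac_up[of 0 m] by simp
  have "ac (Suc m) 0 = real (Suc m) * ac m 0 + real m * ac m 0"
  proof -
    have "2 * real (Suc m) * ac (Suc m) 0 = 2 * real (Suc m) * (real (Suc m) * ac m 0 + real m * ac m 0)"
      unfolding u by (simp add: algebra_simps)
    then show ?thesis by simp
  qed
  then show ?thesis using 0 by (simp add: cE_def)
next
  case (Suc i')
  show ?thesis
  proof (cases "Suc i' \<le> m")
    case True
    obtain N where m: "m = Suc i' + N" using True le_iff_add by blast
    have e4: "m - Suc i' = N" using m by simp
    have sh: "2 * real (Suc N) * ac m i' = real (Suc i') * real (Suc i' + 2 * N + 1) * ac m (Suc i')"
      using ac_shift[OF True] unfolding e4 .
    have u: "2 * real (Suc N) * ac (Suc m) (Suc i') = real (Suc (Suc (Suc i' + 2*N))) * real (Suc (Suc i' + 2*N)) * ac m (Suc i')"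
      using ac_up[OF True] unfolding e4 .
    have c: "cE (Suc m) 0 (Suc i') = ac (Suc m) (Suc i')" "cE m 0 (Suc i') = ac m (Suc i')"
      "cE m 0 i' = ac m i'" "cE m 1 (Suc i') = real N * ac m (Suc i')"
      using True by (simp_all add: cE_def e4)
    have hm: "real m = real (Suc i') + real N" using m by simp
    have "2 * real (Suc N) * ac (Suc m) (Suc i') = 2 * real (Suc N) * (real (Suc m) * ac m (Suc i') + ac m i' + real N * ac m (Suc i'))"
      using u sh hm by (simp add: algebra_simps)
    then have "ac (Suc m) (Suc i') = real (Suc m) * ac m (Suc i') + ac m i' + real N * ac m (Suc i')"
      by simp
    then show ?thesis unfolding Suc c nat.case(2) .
  next
    case False
    show ?thesis
    proof (cases "i' = m")
      case True
      then show ?thesis using Suc by (simp add: cE_def ac_diag)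
    next
      case False
      then show ?thesis using Suc \<open>\<not> Suc i' \<le> m\<close> by (simp add: cE_def)
    qed
  qed
qed

lemma EP_up: "EP (Suc m) 0 = [:complex_of_real (real (Suc m)), 1:] * EP m 0 + EP m 1"
proof (rule poly_eqI)
  fix i
  have r: "cE (Suc m) 0 i = real (Suc m) * cE m 0 i + (case i of 0 \<Rightarrow> 0 | Suc i' \<Rightarrow> cE m 0 i') + cE m 1 i"
    by (rule cE_up)
  have c2: "coeff ([:complex_of_real (real (Suc m)), 1:] * EP m 0 + EP m 1) i =
     complex_of_real (real (Suc m) * cE m 0 i + (case i of 0 \<Rightarrow> 0 | Suc i' \<Rightarrow> cE m 0 i') + cE m 1 i)"
  proof (cases i)
    case 0
    have "coeff ([:complex_of_real (real (Suc m)), 1:] * EP m 0 + EP m 1) 0 =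
      complex_of_real (real (Suc m)) * complex_of_real (cE m 0 0) + 0 + complex_of_real (cE m 1 0)"
      by (simp only: lin_mult coeff_add coeff_smult coeff_pCons_0 coeff_EP)
    also have "\<dots> = complex_of_real (real (Suc m) * cE m 0 0 + (case 0 of 0 \<Rightarrow> 0 | Suc i' \<Rightarrow> cE m 0 i') + cE m 1 0)"
      by (simp only: of_real_mult of_real_add nat.case(1) of_real_0)
    finally show ?thesis unfolding 0 .
  next
    case (Suc i')
    have "coeff ([:complex_of_real (real (Suc m)), 1:] * EP m 0 + EP m 1) (Suc i') =
      complex_of_real (real (Suc m)) * complex_of_real (cE m 0 (Suc i')) + complex_of_real (cE m 0 i') + complex_of_real (cE m 1 (Suc i'))"
      by (simp only: lin_mult coeff_add coeff_smult coeff_pCons_Suc coeff_EP)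
    also have "\<dots> = complex_of_real (real (Suc m) * cE m 0 (Suc i') + (case Suc i' of 0 \<Rightarrow> 0 | Suc i' \<Rightarrow> cE m 0 i') + cE m 1 (Suc i'))"
      by (simp only: of_real_mult of_real_add nat.case(2))
    finally show ?thesis unfolding Suc .
  qed
  show "coeff (EP (Suc m) 0) i = coeff ([:complex_of_real (real (Suc m)), 1:] * EP m 0 + EP m 1) i"
    unfolding c2 coeff_EP by (rule arg_cong[where f=complex_of_real, OF r])
qed

lemma poly_lin: "poly ([:a, 1:] * p) w = (a + w) * poly p (w::complex)"
  by (simp add: algebra_simps)

lemma poly_EP_top: "poly (EP m m) w = complex_of_real (ac m 0)"
proof -
  have "poly (EP m m) w = (\<Sum>k\<le>m. (if k = 0 then complex_of_real (ac m 0) else 0))"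
    unfolding poly_EP
  proof (rule sum.cong[OF refl])
    fix k assume "k \<in> {..m}"
    then have k: "k \<le> m" by simp
    show "complex_of_real (cE m m k) * w ^ k = (if k = 0 then complex_of_real (ac m 0) else 0)"
    proof (cases "k = 0")
      case True then show ?thesis by (simp add: cE_def)
    next
      case False
      then have "m - k < m" using k by simp
      then have "(m - k) choose m = 0" by (simp add: binomial_eq_0)
      then show ?thesis using False k by (simp add: cE_def)
    qed
  qed
  also have "\<dots> = complex_of_real (ac m 0)" by (simp add: sum.delta)
  finally show ?thesis .
qed

lemma poly_EP_over: "poly (EP m (Suc m)) w = 0"
  unfolding poly_EP
proof (rule sum.neutral, intro ballI)
  fix k assume "k \<in> {..m}"
  then have "m - k < Suc m" by simp
  then have "(m - k) choose Suc m = 0" by (simp add: binomial_eq_0)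
  then show "complex_of_real (cE m (Suc m) k) * w ^ k = 0" by (simp add: cE_def)
qed

lemma re_ofr: "Re (complex_of_real c * z) = c * Re z"
  by simp

lemma Re_inv_pos: "Re (q::complex) > 0 \<Longrightarrow> Re (1 / q) > 0"
  by (simp add: Re_divide power2_eq_square add_pos_nonneg)

lemma chain:
  assumes w: "Re w > -1" and d: "d \<le> m"
  shows "poly (EP m (m - d)) w \<noteq> 0 \<and> Re (poly (EP m (Suc (m - d))) w / poly (EP m (m - d)) w) \<ge> 0"
  using d
proof (induction d)
  case 0
  have "ac m 0 > 0" by (rule ac_pos)
  then show ?case by (simp add: poly_EP_top poly_EP_over)
next
  case (Suc d)
  define j where "j = m - Suc d"
  have jm: "j < m" using Suc.prems j_def by simp
  have sj: "Suc j = m - d" using Suc.prems j_def by simp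
  have IH: "poly (EP m (Suc j)) w \<noteq> 0 \<and> Re (poly (EP m (Suc (Suc j))) w / poly (EP m (Suc j)) w) \<ge> 0"
    using Suc.IH Suc.prems sj by simp
  define e0 where "e0 = poly (EP m j) w"
  define e1 where "e1 = poly (EP m (Suc j)) w"
  define e2 where "e2 = poly (EP m (Suc (Suc j))) w"
  define D where "D = (real m - real j) * real (m+j+1)"
  have Dpos: "D > 0" unfolding D_def using jm by simp
  have rec: "complex_of_real D * e0 = complex_of_real (2*real (Suc j)) * ((complex_of_real (real (Suc j)) + w) * e1)
      + complex_of_real (real (Suc j) * real (Suc (Suc j))) * e2"
    using arg_cong[where f="\<lambda>p. poly p w", OF EP_rec[OF jm]]
    unfolding e0_def e1_def e2_def D_def by (simp add: poly_lin algebra_simps)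
  have e1nz: "e1 \<noteq> 0" using IH unfolding e1_def by simp
  have r: "Re (e2 / e1) \<ge> 0" using IH unfolding e1_def e2_def by simp
  define X where "X = complex_of_real (2*real (Suc j)) * (complex_of_real (real (Suc j)) + w)
      + complex_of_real (real (Suc j) * real (Suc (Suc j))) * (e2 / e1)"
  have XRe: "Re X > 0"
  proof -
    have "Re X = 2*real (Suc j) * Re (complex_of_real (real (Suc j)) + w) + real (Suc j) * real (Suc (Suc j)) * Re (e2 / e1)"
      unfolding X_def by (simp only: plus_complex.sel re_ofr)
    also have "Re (complex_of_real (real (Suc j)) + w) = real (Suc j) + Re w" by simp
    finally have "Re X = 2*real (Suc j) * (real (Suc j) + Re w) + real (Suc j) * real (Suc (Suc j)) * Re (e2 / e1)" .
    moreover have "real (Suc j) + Re w > 0" using w by simp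
    ultimately show ?thesis using r by (simp add: add_pos_nonneg)
  qed
  have q: "e0 / e1 = X / complex_of_real D"
    using rec e1nz Dpos unfolding X_def by (simp add: field_simps)
  have qRe: "Re (e0 / e1) > 0" unfolding q using XRe Dpos by simp
  have e0nz: "e0 \<noteq> 0" using qRe by auto
  have "Re (e1 / e0) > 0"
    using Re_inv_pos[OF qRe] by simp
  then show ?case using e0nz unfolding e0_def e1_def j_def[symmetric] sj[symmetric] by simp
qed

lemma theta_nz:
  assumes w: "Re w > -1"
  shows "poly (EP n 0) w \<noteq> 0"
proof (cases n)
  case 0
  then show ?thesis by (simp add: poly_EP cE_def ac_def)
next
  case (Suc m)
  have ch: "poly (EP m 0) w \<noteq> 0 \<and> Re (poly (EP m 1) w / poly (EP m 0) w) \<ge> 0"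
    using chain[OF w, of m m] by simp
  define e0 where "e0 = poly (EP m 0) w"
  define e1 where "e1 = poly (EP m 1) w"
  have e0nz: "e0 \<noteq> 0" using ch unfolding e0_def by simp
  have "poly (EP n 0) w = (complex_of_real (real (Suc m)) + w) * e0 + e1"
    unfolding Suc EP_up e0_def e1_def by (simp add: poly_lin algebra_simps)
  also have "\<dots> = e0 * ((complex_of_real (real (Suc m)) + w) + e1 / e0)"
    using e0nz by (simp add: field_simps)
  finally have eq: "poly (EP n 0) w = e0 * ((complex_of_real (real (Suc m)) + w) + e1 / e0)" .
  have "Re ((complex_of_real (real (Suc m)) + w) + e1 / e0) > 0"
    using ch w unfolding e0_def e1_def by simp
  then have "(complex_of_real (real (Suc m)) + w) + e1 / e0 \<noteq> 0" by (metis less_irrefl zero_complex.sel(1))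
  then show ?thesis unfolding eq using e0nz by simp
qed


lemma bessel_coeff:
  assumes "j \<le> n"
  shows "(of_nat (fact (n + j) div (fact (n - j) * fact j)) / 2 ^ j :: complex) = complex_of_real (ac n (n - j))"
proof -
  have dv: "fact (n - j) * fact j dvd (fact (n + j) :: nat)"
  proof -
    have "fact (n - j) dvd (fact n :: nat)" by (rule fact_dvd) simp
    then have "fact (n - j) * fact j dvd (fact n * fact j :: nat)" by (rule mult_dvd_mono) simp
    moreover have "fact n * fact j dvd (fact (n + j) :: nat)" using fact_fact_dvd_fact[of n j] by simp
    ultimately show ?thesis by (rule dvd_trans)
  qed
  have r: "real (fact (n + j) div (fact (n - j) * fact j)) = fact (n + j) / (fact (n - j) * fact j)"
    using real_of_nat_div[OF dv] by simp
  have e1: "2 * n - (n - j) = n + j" using assms by simp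
  have e2: "n - (n - j) = j" using assms by simp
  have "(of_nat (fact (n + j) div (fact (n - j) * fact j)) / 2 ^ j :: complex)
      = complex_of_real (real (fact (n + j) div (fact (n - j) * fact j)) / 2 ^ j)" by simp
  also have "\<dots> = complex_of_real (ac n (n - j))"
    unfolding r ac_def e1 e2 by (simp add: field_simps)
  finally show ?thesis .
qed

lemma bessel_link:
  assumes "\<alpha> \<noteq> 0"
  shows "poly (bessel_poly n) \<alpha> = \<alpha> ^ n * poly (EP n 0) (1 / \<alpha>)"
proof -
  have "poly (bessel_poly n) \<alpha> = (\<Sum>j\<le>n. complex_of_real (ac n (n - j)) * \<alpha> ^ j)"
    unfolding bessel_poly_def poly_sum poly_monom
    by (rule sum.cong[OF refl]) (simp add: bessel_coeff)
  also have "\<dots> = (\<Sum>k\<le>n. complex_of_real (ac n k) * \<alpha> ^ (n - k))"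
    by (rule sum.reindex_bij_witness[where i="\<lambda>k. n - k" and j="\<lambda>k. n - k"]) auto
  also have "\<dots> = \<alpha> ^ n * poly (EP n 0) (1 / \<alpha>)"
    unfolding poly_EP sum_distrib_left
  proof (rule sum.cong[OF refl])
    fix k assume "k \<in> {..n}"
    then have k: "k \<le> n" by simp
    have "\<alpha> ^ n = \<alpha> ^ (n - k) * \<alpha> ^ k" using k by (simp flip: power_add)
    then have "\<alpha> ^ n * (1 / \<alpha>) ^ k = \<alpha> ^ (n - k)" using assms by (simp add: power_one_over field_simps)
    then show "complex_of_real (ac n k) * \<alpha> ^ (n - k) = \<alpha> ^ n * (complex_of_real (cE n 0 k) * (1 / \<alpha>) ^ k)"
      using k by (simp add: cE_def algebra_simps)
  qed
  finally show ?thesis .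
qed

lemma bessel_at0: "poly (bessel_poly n) 0 = 1"
proof -
  have "poly (bessel_poly n) 0 = (\<Sum>k\<le>n. of_nat (fact (n + k) div (fact (n - k) * fact k)) / 2 ^ k * (0::complex) ^ k)"
    unfolding bessel_poly_def poly_sum poly_monom ..
  also have "\<dots> = (\<Sum>k\<le>n. if k = 0 then 1 else 0)"
    by (rule sum.cong[OF refl]) simp
  also have "\<dots> = 1" by simp
  finally show ?thesis .
qed

theorem proposition2:
  fixes n :: nat and \<alpha> :: complex
  assumes "n \<ge> 1" and "poly (bessel_poly n) \<alpha> = 0"
  shows "norm (1 - \<alpha> / 2) > 1 \<and> norm (1 + \<alpha> / 2) < 1"
proof -
  have a0: "\<alpha> \<noteq> 0" using assms(2) bessel_at0[of n] by auto
  have "\<not> Re (1 / \<alpha>) > -1"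
  proof
    assume "Re (1 / \<alpha>) > -1"
    then have "poly (EP n 0) (1 / \<alpha>) \<noteq> 0" by (rule theta_nz)
    then have "poly (bessel_poly n) \<alpha> \<noteq> 0" using a0 by (simp add: bessel_link)
    then show False using assms(2) by simp
  qed
  then have le: "Re (1 / \<alpha>) \<le> -1" by simp
  define x where "x = Re \<alpha>"
  define y where "y = Im \<alpha>"
  have "(cmod \<alpha>)^2 > 0" using a0 by simp
  then have s: "x^2 + y^2 > 0" unfolding x_def y_def cmod_power2 .
  have "Re (1 / \<alpha>) = x / (x^2 + y^2)" unfolding x_def y_def by (simp add: Re_divide)
  then have "x / (x^2 + y^2) \<le> -1" using le by simp
  then have xle: "x \<le> -(x^2 + y^2)" using s by (simp add: divide_le_eq)
  have n1: "norm (1 + \<alpha> / 2) = sqrt ((1 + x/2)^2 + (y/2)^2)"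
    unfolding x_def y_def by (simp add: cmod_def)
  have n2: "norm (1 - \<alpha> / 2) = sqrt ((1 - x/2)^2 + (y/2)^2)"
    unfolding x_def y_def by (simp add: cmod_def)
  have "(1 + x/2)^2 + (y/2)^2 < 1"
    using xle s by (simp add: power2_eq_square field_simps)
  moreover have "(1 - x/2)^2 + (y/2)^2 > 1"
    using xle s by (simp add: power2_eq_square field_simps)
  ultimately show ?thesis unfolding n1 n2 by simp
qed

end
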